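(* Let $0<c_1,c_2<1$ with $c_1+c_2=1$ and $c_1\neq c_2$. Then there exists a finitely supported complex sequence $u=(u_n)_{n\in\mathbb{N}}$ such that $$\sum_{k=1}^{\infty}\left[c_1(2k-1)|u_{2k-1}+u_{2k}|^2+c_2(2k)|u_{2k}+u_{2k+1}|^2\right]<\frac{c_1-c_2}{2}\sum_{k=1}^{\infty}\left[|u_{2k-1}|^2-|u_{2k}|^2\right].$$ *)

theory Defs
  imports "HOL-Analysis.Analysis"
begin

end

theory Submission
  imports Defs
begin

lemma big_sum: "\<exists>N. (\<Sum>k<N. 1/(2*real k+2)) > B"
proof -
  have "\<forall>\<^sub>F n in sequentially. harm n \<ge> (2*B+1::real)"
    using harm_at_top filterlim_at_top by blast
  then obtain N where "harm N \<ge> (2*B+1::real)" by (meson eventually_sequentially order_refl)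
  moreover have "(\<Sum>k<N. 1/(2*real k+2)) = harm N / 2"
    unfolding harm_altdef by (simp add: sum_divide_distrib field_simps inverse_eq_divide)
  ultimately show ?thesis by (intro exI[of _ N]) linarith
qed

lemma big_sum_odd: "\<exists>N. (\<Sum>k<N. 1/(2*real k+1)) > B"
proof -
  obtain N where "(\<Sum>k<N. 1/(2*real k+2)) > B" using big_sum by blast
  moreover have "(\<Sum>k<N. 1/(2*real k+2)) \<le> (\<Sum>k<N. 1/(2*real k+1))"
    by (intro sum_mono) (simp add: frac_le)
  ultimately show ?thesis by (intro exI[of _ N]) linarith
qed

lemma case1:
  fixes c1 c2 :: real
  assumes "0 < c1" "0 < c2" "c2 < c1"
  shows "\<exists>u :: nat \<Rightarrow> complex. finite {n. u n \<noteq> 0} \<and>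
    (\<Sum>k. (let m = Suc k in
        c1 * real (2*m - 1) * (cmod (u (2*m - 1) + u (2*m)))\<^sup>2
      + c2 * real (2*m) * (cmod (u (2*m) + u (2*m + 1)))\<^sup>2))
    < (c1 - c2) / 2 * (\<Sum>k. (let m = Suc k in
        (cmod (u (2*m - 1)))\<^sup>2 - (cmod (u (2*m)))\<^sup>2))"
proof -
  obtain N where N: "(\<Sum>k<N. 1/(2*real k+1)) > 2*c1/(c1-c2)" using big_sum_odd by blast
  define S where "S = (\<Sum>k<N. 1/(2*real k+1))"
  define w where "w k = (\<Sum>j\<in>{k..<N}. 1/(2*real j+1))" for k
  define u where "u n = complex_of_real ((-1)^n * w (n div 2))" for n
  have wd: "w k = 1/(2*real k+1) + w (Suc k)" if "k < N" for k
    unfolding w_def using that by (simp add: sum.atLeast_Suc_lessThan)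
  have wz: "w k = 0" if "N \<le> k" for k unfolding w_def using that by simp
  have w0: "w 0 = S" unfolding w_def S_def by (simp add: atLeast0LessThan)
  have fin: "finite {n. u n \<noteq> 0}"
  proof (rule finite_subset[of _ "{..<2*N}"])
    show "{n. u n \<noteq> 0} \<subseteq> {..<2*N}"
    proof
      fix n assume "n \<in> {n. u n \<noteq> 0}"
      then have "\<not> N \<le> n div 2" using wz unfolding u_def by auto
      then show "n \<in> {..<2*N}" by auto
    qed
  qed simp
  have u1: "u (2*Suc k - 1) = - complex_of_real (w k)" for k
  proof -
    have "2*Suc k - 1 = Suc (2*k)" by simp
    then show ?thesis unfolding u_def by simp
  qed
  have u2: "u (2*Suc k) = complex_of_real (w (Suc k))" for k
    unfolding u_def by simp
  have u3: "u (2*Suc k + 1) = - complex_of_real (w (Suc k))" for k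
  proof -
    have "2*Suc k + 1 = Suc (2*Suc k)" by simp
    then show ?thesis unfolding u_def by simp
  qed
  define L where "L k = (let m = Suc k in
        c1 * real (2*m - 1) * (cmod (u (2*m - 1) + u (2*m)))\<^sup>2
      + c2 * real (2*m) * (cmod (u (2*m) + u (2*m + 1)))\<^sup>2)" for k
  define R where "R k = (let m = Suc k in
        (cmod (u (2*m - 1)))\<^sup>2 - (cmod (u (2*m)))\<^sup>2)" for k
  have L: "L k = c1 * (2*real k+1) * (w (Suc k) - w k)^2" for k
  proof -
    have "u (2*Suc k - 1) + u (2*Suc k) = complex_of_real (w (Suc k) - w k)"
      using u1 u2 by simp
    moreover have "u (2*Suc k) + u (2*Suc k + 1) = 0" using u2 u3 by simp
    moreover have "real (2*Suc k - 1) = 2*real k+1" by simp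
    ultimately show ?thesis unfolding L_def Let_def by (simp only: norm_of_real power2_abs) simp
  qed
  have R: "R k = (w k)^2 - (w (Suc k))^2" for k
    unfolding R_def Let_def u1 u2 by (simp only: norm_minus_cancel norm_of_real power2_abs)
  have sL: "(\<Sum>k. L k) = (\<Sum>k<N. L k)"
    by (rule suminf_finite) (auto simp: L wz)
  have sR: "(\<Sum>k. R k) = (\<Sum>k<N. R k)"
    by (rule suminf_finite) (auto simp: R wz)
  have "(\<Sum>k<N. L k) = (\<Sum>k<N. c1 * (1/(2*real k+1)))"
  proof (rule sum.cong)
    fix k assume "k \<in> {..<N}"
    then have d: "w (Suc k) - w k = - (1/(2*real k+1))" using wd by simp
    have p: "(2*real k+1) > 0" by simp
    have "c1 * (2*real k+1) * (- (1/(2*real k+1)))^2 = c1 * (1/(2*real k+1))"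
      using p by (simp add: power2_eq_square)
    then show "L k = c1 * (1/(2*real k+1))" unfolding L d .
  qed simp
  also have "\<dots> = c1 * S" unfolding S_def by (simp add: sum_distrib_left)
  finally have eL: "(\<Sum>k. L k) = c1 * S" using sL by simp
  have "(\<Sum>k<N. R k) = (w 0)^2 - (w N)^2" unfolding R by (rule sum_lessThan_telescope')
  then have eR: "(\<Sum>k. R k) = S^2" using sR w0 wz by simp
  have Spos: "S > 0" using N assms unfolding S_def[symmetric] by (smt (verit) divide_pos_pos)
  have "2*c1 < (c1-c2) * S" using N assms unfolding S_def[symmetric] by (simp add: field_simps)
  then have "2*c1*S < (c1-c2)*S*S" using mult_strict_right_mono[OF _ Spos] by blast
  moreover have "(c1 - c2)/2 * S^2 = ((c1-c2)*S*S)/2" by (simp add: power2_eq_square)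
  ultimately have "c1 * S < (c1 - c2)/2 * S^2" by linarith
  then have "(\<Sum>k. L k) < (c1 - c2)/2 * (\<Sum>k. R k)" using eL eR by simp
  then show ?thesis using fin unfolding L_def R_def by blast
qed

lemma case2:
  fixes c1 c2 :: real
  assumes "0 < c1" "0 < c2" "c1 < c2" "c1 + c2 = 1"
  shows "\<exists>u :: nat \<Rightarrow> complex. finite {n. u n \<noteq> 0} \<and>
    (\<Sum>k. (let m = Suc k in
        c1 * real (2*m - 1) * (cmod (u (2*m - 1) + u (2*m)))\<^sup>2
      + c2 * real (2*m) * (cmod (u (2*m) + u (2*m + 1)))\<^sup>2))
    < (c1 - c2) / 2 * (\<Sum>k. (let m = Suc k in
        (cmod (u (2*m - 1)))\<^sup>2 - (cmod (u (2*m)))\<^sup>2))"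
proof -
  define s where "s = c2 - c1"
  have spos: "s > 0" using assms s_def by simp
  obtain N where N: "(\<Sum>k<N. 1/(2*real k+2)) > 2*c2/s^2" using big_sum by blast
  define K where "K = (\<Sum>k<N. 1/(2*real k+2))"
  have Kb: "K > 2*c2/s^2" using N K_def by simp
  have Kpos: "K > 0" using Kb assms spos by (smt (verit) divide_pos_pos zero_less_power)
  have Npos: "0 < N" using Kpos K_def by (cases N) auto
  define z where "z k = (\<Sum>j\<in>{k..<N}. 1/(2*real j+2))" for k
  define v where "v n = (if n = 1 then (1-s) * z 0 else z ((n-1) div 2))" for n
  define u where "u n = complex_of_real ((-1)^n * v n)" for n
  define a where "a k = (if k = 0 then (1-s) * z 0 else z k)" for k
  have zd: "z k = 1/(2*real k+2) + z (Suc k)" if "k < N" for k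
    unfolding z_def using that by (simp add: sum.atLeast_Suc_lessThan)
  have zz: "z k = 0" if "N \<le> k" for k unfolding z_def using that by simp
  have z0: "z 0 = K" unfolding z_def K_def by (simp add: atLeast0LessThan)
  have az: "a k = 0" if "N \<le> k" for k using zz that Npos unfolding a_def by simp
  have vz: "v n = 0" if "2*N < n" for n
  proof -
    have "n \<noteq> 1" using that Npos by simp
    moreover have "N \<le> (n-1) div 2" using that by simp
    ultimately show ?thesis unfolding v_def using zz by simp
  qed
  have fin: "finite {n. u n \<noteq> 0}"
  proof (rule finite_subset[of _ "{..2*N}"])
    show "{n. u n \<noteq> 0} \<subseteq> {..2*N}"
    proof
      fix n assume "n \<in> {n. u n \<noteq> 0}"
      then have "\<not> 2*N < n" using vz unfolding u_def by auto
      then show "n \<in> {..2*N}" by auto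
    qed
  qed simp
  have u1: "u (2*Suc k - 1) = - complex_of_real (a k)" for k
  proof -
    have e: "2*Suc k - 1 = Suc (2*k)" by simp
    show ?thesis unfolding u_def e v_def a_def by simp
  qed
  have u2: "u (2*Suc k) = complex_of_real (z k)" for k
  proof -
    have e: "2*Suc k - 1 = Suc (2*k)" by simp
    show ?thesis unfolding u_def v_def by (simp add: e)
  qed
  have u3: "u (2*Suc k + 1) = - complex_of_real (z (Suc k))" for k
  proof -
    have e: "2*Suc k + 1 = Suc (2*Suc k)" by simp
    show ?thesis unfolding u_def v_def e by simp
  qed
  define L where "L k = (let m = Suc k in
        c1 * real (2*m - 1) * (cmod (u (2*m - 1) + u (2*m)))\<^sup>2
      + c2 * real (2*m) * (cmod (u (2*m) + u (2*m + 1)))\<^sup>2)" for k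
  define R where "R k = (let m = Suc k in
        (cmod (u (2*m - 1)))\<^sup>2 - (cmod (u (2*m)))\<^sup>2)" for k
  have L: "L k = c1 * (2*real k+1) * (z k - a k)^2 + c2 * (2*real k+2) * (z k - z (Suc k))^2" for k
  proof -
    have "u (2*Suc k - 1) + u (2*Suc k) = complex_of_real (z k - a k)"
      using u1 u2 by simp
    moreover have "u (2*Suc k) + u (2*Suc k + 1) = complex_of_real (z k - z (Suc k))" using u2 u3 by simp
    moreover have "real (2*Suc k - 1) = 2*real k+1" by simp
    moreover have "real (2*Suc k) = 2*real k+2" by simp
    ultimately show ?thesis unfolding L_def Let_def by (simp only: norm_of_real power2_abs)
  qed
  have R: "R k = (a k)^2 - (z k)^2" for k
    unfolding R_def Let_def u1 u2 by (simp only: norm_minus_cancel norm_of_real power2_abs)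
  have sL: "(\<Sum>k. L k) = (\<Sum>k<N. L k)"
    by (rule suminf_finite) (auto simp: L zz az)
  have sR: "(\<Sum>k. R k) = (\<Sum>k<N. R k)"
    by (rule suminf_finite) (auto simp: R zz az)
  have "(\<Sum>k<N. L k) = (\<Sum>k<N. (if k = 0 then c1 * s^2 * K^2 else 0) + c2 * (1/(2*real k+2)))"
  proof (rule sum.cong)
    fix k assume "k \<in> {..<N}"
    then have d: "z k - z (Suc k) = 1/(2*real k+2)" using zd by simp
    have p: "(2*real k+2) > 0" by simp
    have e2: "c2 * (2*real k+2) * (1/(2*real k+2))^2 = c2 * (1/(2*real k+2))"
      using p by (simp add: power2_eq_square)
    have e1: "c1 * (2*real k+1) * (z k - a k)^2 = (if k = 0 then c1 * s^2 * K^2 else 0)"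
    proof (cases "k = 0")
      case True
      then have "z k - a k = s * K" unfolding a_def using z0 by (simp add: algebra_simps)
      then show ?thesis using True by (simp add: power_mult_distrib)
    next
      case False
      then show ?thesis unfolding a_def by simp
    qed
    show "L k = (if k = 0 then c1 * s^2 * K^2 else 0) + c2 * (1/(2*real k+2))"
      unfolding L d e1 e2 ..
  qed simp
  also have "\<dots> = c1 * s^2 * K^2 + c2 * K"
    using Npos unfolding K_def by (simp add: sum.distrib sum_distrib_left)
  finally have eL: "(\<Sum>k. L k) = c1 * s^2 * K^2 + c2 * K" using sL by simp
  have "(\<Sum>k<N. R k) = (\<Sum>k<N. if k = 0 then ((1-s)^2 - 1) * K^2 else 0)"
  proof (rule sum.cong)
    fix k assume "k \<in> {..<N}"
    show "R k = (if k = 0 then ((1-s)^2 - 1) * K^2 else 0)"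
      unfolding R a_def using z0 by (simp add: power2_eq_square algebra_simps)
  qed simp
  also have "\<dots> = ((1-s)^2 - 1) * K^2" using Npos by simp
  finally have eR: "(\<Sum>k. R k) = ((1-s)^2 - 1) * K^2" using sR by simp
  have c1e: "c1 = (1 - s)/2" "c2 = (1+s)/2" using assms s_def by auto
  have key: "(c1 - c2) / 2 * (((1-s)^2 - 1) * K^2) - (c1 * s^2 * K^2 + c2 * K)
      = K * (s^2 * K / 2 - c2)"
    unfolding c1e by (simp add: power2_eq_square field_simps)
  have "2*c2 < s^2 * K" using Kb spos by (simp add: field_simps)
  then have "0 < K * (s^2 * K / 2 - c2)" using Kpos by simp
  then have "(\<Sum>k. L k) < (c1 - c2)/2 * (\<Sum>k. R k)" using eL eR key by simp
  then show ?thesis using fin unfolding L_def R_def by blast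
qed

theorem lemma3:
  fixes c1 c2 :: real
  assumes "0 < c1" "c1 < 1" "0 < c2" "c2 < 1" "c1 + c2 = 1" "c1 \<noteq> c2"
  shows "\<exists>u :: nat \<Rightarrow> complex. finite {n. u n \<noteq> 0} \<and>
    (\<Sum>k. (let m = Suc k in
        c1 * real (2*m - 1) * (cmod (u (2*m - 1) + u (2*m)))\<^sup>2
      + c2 * real (2*m) * (cmod (u (2*m) + u (2*m + 1)))\<^sup>2))
    < (c1 - c2) / 2 * (\<Sum>k. (let m = Suc k in
        (cmod (u (2*m - 1)))\<^sup>2 - (cmod (u (2*m)))\<^sup>2))"
proof (cases "c2 < c1")
  case True
  then show ?thesis using case1 assms by blast
next
  case False
  then have "c1 < c2" using assms by simp
  then show ?thesis using case2 assms by blast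
qed

end
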